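(* Let $(J,[\cdot,\cdot],\alpha,B)$ be a finite-dimensional multiplicative metric Hom-Jacobi-Jordan algebra. Then (1) the center $\mathfrak Z(J)$ is an ideal of $J$; (2) $\mathfrak Z(J)=[J,J]^{\perp}$, and consequently $\dim\mathfrak Z(J)+\dim[J,J]=\dim J$.
   Context: A Hom-Jacobi-Jordan algebra is $(J,[\cdot,\cdot],\alpha)$ with $[\cdot,\cdot]$ symmetric bilinear, $\alpha$ linear and $[\alpha(x),[y,z]]+[\alpha(y),[z,x]]+[\alpha(z),[x,y]]=0$ for all $x,y,z$; it is multiplicative if $\alpha([x,y])=[\alpha(x),\alpha(y)]$. A metric Hom-Jacobi-Jordan algebra is $(J,[\cdot,\cdot],\alpha,B)$ with $B$ a nondegenerate symmetric bilinear form such that $B(x,[y,z])=B([x,y],z)$ and $B(\alpha(x),y)=B(x,\alpha(y))$ for all $x,y,z$. An ideal is a subspace $I$ with $[I,J]\subset I$ and $\alpha(I)\subset I$. The center is $\mathfrak Z(J)=\{x\in J: [x,y]=0\ \forall y\in J\}$; $[J,J]$ is the span of all $[x,y]$; for a subspace $W$, $W^\perp=\{x: B(x,w)=0\ \forall w\in W\}$. *)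

theory Defs
  imports Complex_Main
begin

definition bilinear_form_on ::
  "('k::field \<Rightarrow> 'v::ab_group_add \<Rightarrow> 'v) \<Rightarrow> ('v \<Rightarrow> 'v \<Rightarrow> 'k) \<Rightarrow> bool" where
  "bilinear_form_on scale B \<longleftrightarrow>
     (\<forall>x y z. B (x + y) z = B x z + B y z) \<and>
     (\<forall>x y z. B x (y + z) = B x y + B x z) \<and>
     (\<forall>c x y. B (scale c x) y = c * B x y) \<and>
     (\<forall>c x y. B x (scale c y) = c * B x y)"

definition bilinear_map_on ::
  "('k::field \<Rightarrow> 'v::ab_group_add \<Rightarrow> 'v) \<Rightarrow> ('v \<Rightarrow> 'v \<Rightarrow> 'v) \<Rightarrow> bool" where
  "bilinear_map_on scale br \<longleftrightarrow>
     (\<forall>x y z. br (x + y) z = br x z + br y z) \<and>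
     (\<forall>x y z. br x (y + z) = br x y + br x z) \<and>
     (\<forall>c x y. br (scale c x) y = scale c (br x y)) \<and>
     (\<forall>c x y. br x (scale c y) = scale c (br x y))"

definition hom_jacobi_jordan ::
  "('k::field \<Rightarrow> 'v::ab_group_add \<Rightarrow> 'v) \<Rightarrow> ('v \<Rightarrow> 'v \<Rightarrow> 'v) \<Rightarrow> ('v \<Rightarrow> 'v) \<Rightarrow> bool" where
  "hom_jacobi_jordan scale br \<alpha> \<longleftrightarrow>
     Vector_Spaces.vector_space scale \<and>
     bilinear_map_on scale br \<and>
     (\<forall>x y. br x y = br y x) \<and>
     Vector_Spaces.linear scale scale \<alpha> \<and>
     (\<forall>x y z. br (\<alpha> x) (br y z) + br (\<alpha> y) (br z x) + br (\<alpha> z) (br x y) = 0)"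

definition multiplicative :: "('v \<Rightarrow> 'v \<Rightarrow> 'v) \<Rightarrow> ('v \<Rightarrow> 'v) \<Rightarrow> bool" where
  "multiplicative br \<alpha> \<longleftrightarrow> (\<forall>x y. \<alpha> (br x y) = br (\<alpha> x) (\<alpha> y))"

definition metric_hom_jacobi_jordan ::
  "('k::field \<Rightarrow> 'v::ab_group_add \<Rightarrow> 'v) \<Rightarrow> ('v \<Rightarrow> 'v \<Rightarrow> 'v) \<Rightarrow> ('v \<Rightarrow> 'v)
     \<Rightarrow> ('v \<Rightarrow> 'v \<Rightarrow> 'k) \<Rightarrow> bool" where
  "metric_hom_jacobi_jordan scale br \<alpha> B \<longleftrightarrow>
     hom_jacobi_jordan scale br \<alpha> \<and>
     bilinear_form_on scale B \<and>
     (\<forall>x y. B x y = B y x) \<and>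
     (\<forall>x. (\<forall>y. B x y = 0) \<longrightarrow> x = 0) \<and>
     (\<forall>x y z. B x (br y z) = B (br x y) z) \<and>
     (\<forall>x y. B (\<alpha> x) y = B x (\<alpha> y))"

definition finite_dimensional :: "('k::field \<Rightarrow> 'v::ab_group_add \<Rightarrow> 'v) \<Rightarrow> bool" where
  "finite_dimensional scale \<longleftrightarrow> (\<exists>S. finite S \<and> module.span scale S = UNIV)"

definition hjj_ideal ::
  "('k::field \<Rightarrow> 'v::ab_group_add \<Rightarrow> 'v) \<Rightarrow> ('v \<Rightarrow> 'v \<Rightarrow> 'v) \<Rightarrow> ('v \<Rightarrow> 'v) \<Rightarrow> 'v set \<Rightarrow> bool" where
  "hjj_ideal scale br \<alpha> I \<longleftrightarrow>
     module.subspace scale I \<and> (\<forall>x\<in>I. \<forall>y. br x y \<in> I) \<and> \<alpha> ` I \<subseteq> I"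

definition center :: "('v::zero \<Rightarrow> 'v \<Rightarrow> 'v) \<Rightarrow> 'v set" where
  "center br = {x. \<forall>y. br x y = 0}"

definition derived ::
  "('k::field \<Rightarrow> 'v::ab_group_add \<Rightarrow> 'v) \<Rightarrow> ('v \<Rightarrow> 'v \<Rightarrow> 'v) \<Rightarrow> 'v set" where
  "derived scale br = module.span scale {br x y | x y. True}"

definition orth :: "('v \<Rightarrow> 'v \<Rightarrow> 'k::zero) \<Rightarrow> 'v set \<Rightarrow> 'v set" where
  "orth B W = {x. \<forall>w\<in>W. B x w = 0}"

end

theory Submission
  imports Defs
begin

theorem proposition6p3:
  fixes scale :: "'k::field \<Rightarrow> 'v::ab_group_add \<Rightarrow> 'v"
    and br :: "'v \<Rightarrow> 'v \<Rightarrow> 'v" and \<alpha> :: "'v \<Rightarrow> 'v" and B :: "'v \<Rightarrow> 'v \<Rightarrow> 'k"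
  assumes "metric_hom_jacobi_jordan scale br \<alpha> B"
    and "multiplicative br \<alpha>"
    and "finite_dimensional scale"
  shows "hjj_ideal scale br \<alpha> (center br)
         \<and> center br = orth B (derived scale br)
         \<and> vector_space.dim scale (center br) + vector_space.dim scale (derived scale br)
           = vector_space.dim scale (UNIV :: 'v set)"
proof -
  have VS: "vector_space scale" and brb: "bilinear_map_on scale br"
    and lin: "Vector_Spaces.linear scale scale \<alpha>"
    and Bb: "bilinear_form_on scale B" and Bsym: "\<And>x y. B x y = B y x"
    and nd: "\<And>x. (\<forall>y. B x y = 0) \<Longrightarrow> x = 0"
    and inv: "\<And>x y z. B x (br y z) = B (br x y) z"
    and asym: "\<And>x y. B (\<alpha> x) y = B x (\<alpha> y)"
    using assms(1) unfolding metric_hom_jacobi_jordan_def hom_jacobi_jordan_def by blast+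
  have mul: "\<And>x y. \<alpha> (br x y) = br (\<alpha> x) (\<alpha> y)" using assms(2) unfolding multiplicative_def by blast
  obtain S where S: "finite S" "module.span scale S = UNIV"
    using assms(3) unfolding finite_dimensional_def by blast
  interpret vector_space scale by (rule VS)
  have bradd1: "\<And>x y z. br (x + y) z = br x z + br y z"
    and bradd2: "\<And>x y z. br x (y + z) = br x y + br x z"
    and brs1: "\<And>c x y. br (scale c x) y = scale c (br x y)"
    and brs2: "\<And>c x y. br x (scale c y) = scale c (br x y)"
    using brb unfolding bilinear_map_on_def by blast+
  have Badd1: "\<And>x y z. B (x + y) z = B x z + B y z"
    and Badd2: "\<And>x y z. B x (y + z) = B x y + B x z"
    and Bs1: "\<And>c x y. B (scale c x) y = c * B x y"
    and Bs2: "\<And>c x y. B x (scale c y) = c * B x y"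
    using Bb unfolding bilinear_form_on_def by blast+
  have br0: "br 0 y = 0" for y
    using brs1[where c=0 and x=0 and y=y] by simp
  have B0: "B x 0 = 0" for x
    using Bs2[where c=0 and x=x and y=0] by simp
  have B0': "B 0 x = 0" for x
    using Bs1[where c=0 and x=0 and y=x] by simp
  have Bdiff: "B (x - y) v = B x v - B y v" for x y v
    using Badd1[where x="x - y" and y=y and z=v] by simp
  have orth_span: "B x w = 0" if "\<forall>s\<in>T. B x s = 0" "w \<in> span T" for x w T
    using that(2)
  proof (induction rule: span_induct_alt)
    case base then show ?case by (rule B0)
  next
    case (step c a y) then show ?case using that(1) by (simp add: Badd2 Bs2)
  qed
  have ideal: "hjj_ideal scale br \<alpha> (center br)"
    unfolding hjj_ideal_def
  proof (intro conjI)
    show "subspace (center br)"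
      unfolding subspace_def center_def by (auto simp: br0 bradd1 brs1)
    show "\<forall>x\<in>center br. \<forall>y. br x y \<in> center br"
      unfolding center_def by (auto simp: br0)
    show "\<alpha> ` center br \<subseteq> center br"
    proof (auto simp: center_def)
      fix x y assume x: "\<forall>y. br x y = 0"
      have "B (br (\<alpha> x) y) z = 0" for z
      proof -
        have "B (br (\<alpha> x) y) z = B (\<alpha> x) (br y z)" by (simp add: inv)
        also have "\<dots> = B x (br (\<alpha> y) (\<alpha> z))" by (simp add: asym mul)
        also have "\<dots> = 0" by (simp add: inv x B0')
        finally show ?thesis .
      qed
      then show "br (\<alpha> x) y = 0" using nd by blast
    qed
  qed
  define W where "W = derived scale br"
  have Wdef: "W = span {br x y | x y. True}" unfolding W_def derived_def by simp
  have ceq: "center br = orth B W"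
  proof
    show "center br \<subseteq> orth B W"
    proof
      fix x assume "x \<in> center br"
      then have x: "\<forall>y. br x y = 0" by (simp add: center_def)
      have "\<forall>s\<in>{br x y | x y. True}. B x s = 0"
        using x by (auto simp: inv B0')
      then show "x \<in> orth B W" unfolding orth_def Wdef using orth_span by blast
    qed
  next
    show "orth B W \<subseteq> center br"
    proof
      fix x assume "x \<in> orth B W"
      then have x: "\<forall>w\<in>W. B x w = 0" by (simp add: orth_def)
      have "br x y = 0" for y
      proof -
        have "B (br x y) z = 0" for z
        proof -
          have "br y z \<in> W" unfolding Wdef by (rule span_base) blast
          then show ?thesis using x inv by metis
        qed
        then show ?thesis using nd by blast
      qed
      then show "x \<in> center br" by (simp add: center_def)
    qed
  qed
  obtain Bw where Bw: "Bw \<subseteq> W" "independent Bw" "W \<subseteq> span Bw" "card Bw = dim W"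
    using basis_exists[of W] by blast
  obtain Bv where Bv: "Bw \<subseteq> Bv" "independent Bv" "UNIV \<subseteq> span Bv"
    by (rule maximal_independent_subset_extend[OF subset_UNIV Bw(2)])
  have "Bv \<subseteq> span S" using S(2) by simp
  then have fBv: "finite Bv" using independent_span_bound[OF S(1) Bv(2)] by simp
  have fBw: "finite Bw" by (rule finite_subset[OF Bv(1) fBv])
  have spBv: "span Bv = UNIV" using Bv(3) by blast
  interpret FD: finite_dimensional_vector_space scale Bv
    by unfold_locales (use fBv Bv spBv in auto)
  interpret FDP: finite_dimensional_vector_space_pair_1 scale Bv scale
    by unfold_locales
  define \<phi> where "\<phi> x = (\<Sum>v\<in>Bv. scale (B x v) v)" for x
  have linphi: "Vector_Spaces.linear scale scale \<phi>"
    unfolding Vector_Spaces.linear_iff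
  proof (intro conjI allI)
    show "vector_space scale" by (rule VS)
    show "vector_space scale" by (rule VS)
    show "\<phi> (x + y) = \<phi> x + \<phi> y" for x y
      by (simp add: \<phi>_def Badd1 scale_left_distrib sum.distrib)
    show "\<phi> (scale c x) = scale c (\<phi> x)" for c x
      by (simp add: \<phi>_def Bs1 scale_sum_right)
  qed
  have coef0: "\<forall>v\<in>Bv. c v = 0" if "(\<Sum>v\<in>Bv. scale (c v) v) = 0" for c
    using Bv(2) that unfolding FD.independent_explicit by blast
  have injphi: "inj \<phi>"
  proof (rule injI)
    fix x y assume "\<phi> x = \<phi> y"
    then have "(\<Sum>v\<in>Bv. scale (B x v - B y v) v) = 0"
      by (simp add: \<phi>_def scale_left_diff_distrib sum_subtractf)
    then have "\<forall>v\<in>Bv. B (x - y) v = 0" using coef0[of "\<lambda>v. B x v - B y v"] by (simp add: Bdiff)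
    then have "\<forall>w. B (x - y) w = 0" using orth_span spBv by blast
    then show "x = y" using nd by fastforce
  qed
  have surjphi: "surj \<phi>" by (rule FD.linear_inj_imp_surj[OF linphi injphi])
  have orthchar: "x \<in> orth B W \<longleftrightarrow> (\<forall>w\<in>Bw. B x w = 0)" for x
  proof
    assume "x \<in> orth B W" then show "\<forall>w\<in>Bw. B x w = 0" using Bw(1) by (auto simp: orth_def)
  next
    assume "\<forall>w\<in>Bw. B x w = 0" then show "x \<in> orth B W"
      using orth_span Bw(3) by (auto simp: orth_def)
  qed
  have img: "\<phi> ` orth B W = span (Bv - Bw)"
  proof
    show "\<phi> ` orth B W \<subseteq> span (Bv - Bw)"
    proof
      fix y assume "y \<in> \<phi> ` orth B W"
      then obtain x where x: "x \<in> orth B W" "y = \<phi> x" by blast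
      have xw: "\<forall>w\<in>Bw. B x w = 0" using x(1) orthchar by blast
      have "\<phi> x = (\<Sum>v\<in>Bv - Bw. scale (B x v) v)"
        unfolding \<phi>_def
        by (rule sum.mono_neutral_right) (use fBv xw in auto)
      also have "\<dots> \<in> span (Bv - Bw)"
        by (rule span_sum) (auto intro: span_scale span_base)
      finally show "y \<in> span (Bv - Bw)" using x by simp
    qed
  next
    show "span (Bv - Bw) \<subseteq> \<phi> ` orth B W"
    proof
      fix y assume "y \<in> span (Bv - Bw)"
      then obtain u where u: "y = (\<Sum>v\<in>Bv - Bw. scale (u v) v)"
        using span_finite[of "Bv - Bw"] fBv by auto
      obtain x where x: "y = \<phi> x" using surjphi by (metis surjD)
      define c where "c v = (if v \<in> Bv - Bw then u v else 0)" for v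
      have "y = (\<Sum>v\<in>Bv. scale (c v) v)"
        unfolding u c_def
        by (rule sum.mono_neutral_cong_left) (use fBv in auto)
      then have "(\<Sum>v\<in>Bv. scale (B x v - c v) v) = 0"
        using x by (simp add: \<phi>_def scale_left_diff_distrib sum_subtractf)
      then have "\<forall>v\<in>Bv. B x v - c v = 0" by (rule coef0)
      then have "\<forall>w\<in>Bw. B x w = 0" using Bv(1) by (auto simp: c_def)
      then have "x \<in> orth B W" using orthchar by blast
      then show "y \<in> \<phi> ` orth B W" using x by blast
    qed
  qed
  have "dim (orth B W) = dim (\<phi> ` orth B W)"
    using FDP.dim_image_eq[OF linphi] injphi by (metis inj_on_subset subset_UNIV)
  also have "\<dots> = card (Bv - Bw)"
    using img dim_span_eq_card_independent independent_mono[OF Bv(2)] by (metis Diff_subset)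
  also have "\<dots> = card Bv - card Bw" using card_Diff_subset[OF fBw Bv(1)] .
  finally have d1: "dim (orth B W) = card Bv - card Bw" .
  have "card Bw \<le> card Bv" using card_mono[OF fBv Bv(1)] .
  moreover have "dim (UNIV :: 'v set) = card Bv" using FD.dim_UNIV by simp
  ultimately have "dim (center br) + dim W = dim (UNIV :: 'v set)"
    using d1 ceq Bw(4) by simp
  then show ?thesis using ideal ceq unfolding W_def by simp
qed

end
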